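(* Fix $\varepsilon\in(0,\tfrac12)$ and let $r=r(n)>0$ with $r=o(\sqrt n)$. There is $n_0$ such that for all $n\ge n_0$ the following deterministic statement holds. Let $G$ be a graph on a finite vertex set $V$, let $(\mathbf X_v)_{v\in V}$ be points of $\mathcal S_n$, let $v_1,\dots,v_4\in V$ be distinct, and put $V^-=V\setminus\{v_1,\dots,v_4\}$. Suppose that for every $i\in\{1,2,3,4\}$ and every $v\in V^-$, $$r\big(d_G(v,v_i)+\varepsilon/3\big)\ \ge\ \|\mathbf X_v-c_i\|_2\ \ge\ r\big(d_G(v,v_i)-(1+\varepsilon/3)\big).$$ Then for every $j\in\{1,2,3,4\}$ and every $v\in V^-$ with $d_G(v,v_j)=\min_{1\le i\le4}d_G(v,v_i)$, the point $\mathbf X_v$ lies within Euclidean distance at most $r$ of the quarter $Q(n,j)$.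
   Context: $\mathcal S_n=[-\sqrt n/2,\sqrt n/2]^2$ with corners $c_1=(-\sqrt n/2,-\sqrt n/2)$, $c_2=(-\sqrt n/2,\sqrt n/2)$, $c_3=(\sqrt n/2,\sqrt n/2)$, $c_4=(\sqrt n/2,-\sqrt n/2)$. $Q(n,j)$ is the closed quarter of $\mathcal S_n$ (one of the four $\tfrac{\sqrt n}{2}\times\tfrac{\sqrt n}{2}$ subsquares having the origin as a corner) containing $c_j$. $d_G$ denotes graph distance in $G$. *)

theory Defs
  imports "HOL-Analysis.Analysis" "HOL-Library.Landau_Symbols" "HOL-Library.Extended_Real"
begin

definition gwalk :: "'a set \<Rightarrow> ('a \<Rightarrow> 'a \<Rightarrow> bool) \<Rightarrow> 'a list \<Rightarrow> bool" where
  "gwalk V E xs \<longleftrightarrow> xs \<noteq> [] \<and> set xs \<subseteq> V \<and> (\<forall>i < length xs - 1. E (xs ! i) (xs ! Suc i))"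

text \<open>Graph distance (infinity if no path).\<close>
definition gdist :: "'a set \<Rightarrow> ('a \<Rightarrow> 'a \<Rightarrow> bool) \<Rightarrow> 'a \<Rightarrow> 'a \<Rightarrow> enat" where
  "gdist V E u w = (INF xs \<in> {xs. gwalk V E xs \<and> hd xs = u \<and> last xs = w}. enat (length xs - 1))"

definition sgnx :: "nat \<Rightarrow> real" where "sgnx j = (if j \<in> {1,2} then -1 else 1)"
definition sgny :: "nat \<Rightarrow> real" where "sgny j = (if j \<in> {1,4} then -1 else 1)"

definition square :: "nat \<Rightarrow> (real^2) set" where
  "square n = {x. \<bar>x$1\<bar> \<le> sqrt (real n) / 2 \<and> \<bar>x$2\<bar> \<le> sqrt (real n) / 2}"

definition corner :: "nat \<Rightarrow> nat \<Rightarrow> real^2" where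
  "corner n j = vector [sgnx j * sqrt (real n) / 2, sgny j * sqrt (real n) / 2]"

definition quarter :: "nat \<Rightarrow> nat \<Rightarrow> (real^2) set" where
  "quarter n j = {x. 0 \<le> sgnx j * x$1 \<and> sgnx j * x$1 \<le> sqrt (real n) / 2
                   \<and> 0 \<le> sgny j * x$2 \<and> sgny j * x$2 \<le> sqrt (real n) / 2}"

end

theory Submission
  imports Defs
begin
lemma nv: "norm (x::real^2) = sqrt ((x$1)^2 + (x$2)^2)"
  by (simp add: norm_eq_sqrt_inner inner_vec_def sum_2 power2_eq_square)

lemma key:
  fixes a b S tt \<delta> r :: real
  assumes h: "a^2 - b^2 = 4 * S * tt" "a - b \<le> \<delta>" "b^2 \<le> 2 * S^2" "0 \<le> a" "0 \<le> b"
    "\<delta> \<le> 4/3*r" "r \<le> S/50" "0 < S" "0 < r"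
  shows "tt \<le> r"
proof (cases "tt \<le> 0")
  case True then show ?thesis using h by linarith
next
  case False
  have b: "b \<le> 142/100 * S"
  proof (rule ccontr)
    assume "\<not> ?thesis"
    then have "(142/100*S)^2 < b^2" using h by (intro power_strict_mono) auto
    moreover have "0 \<le> S*S" by simp
    moreover have "(142/100*S)^2 = 5041/2500*(S*S)" by (simp add: power2_eq_square)
    moreover have "S^2 = S*S" by (simp add: power2_eq_square)
    ultimately show False using h by linarith
  qed
  have ab: "a > b" using False h
    by (smt (verit) mult_pos_pos power_mono)
  have "4 * S * tt = (a-b)*(a+b)" using h(1) by (simp add: power2_eq_square algebra_simps)
  also have "\<dots> \<le> \<delta> * (2*b + \<delta>)"
    using h ab by (intro mult_mono) auto
  also have "\<dots> \<le> (4/3*r) * (2*(142/100*S) + 4/3*(S/50))"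
    using h b ab by (intro mult_mono) auto
  finally have "4 * S * tt \<le> (4/3*r) * (2*(142/100*S) + 4/3*(S/50))" .
  then have "S*tt \<le> S * r" using h by (simp add: algebra_simps) 
  then show ?thesis using h by simp
qed

lemma sgn_cases: "sgnx i = 1 \<or> sgnx i = -1" "sgny i = 1 \<or> sgny i = -1"
  by (auto simp: sgnx_def sgny_def)

lemma corner_sq:
  "(norm (X - corner n i))^2 = (sgnx i * X$1 - sqrt (real n)/2)^2 + (sgny i * X$2 - sqrt (real n)/2)^2"
proof -
  have "(norm (X - corner n i))^2 = (X$1 - sgnx i * sqrt (real n)/2)^2 + (X$2 - sgny i * sqrt (real n)/2)^2"
    by (simp add: nv corner_def)
  also have "\<dots> = (sgnx i * X$1 - sqrt (real n)/2)^2 + (sgny i * X$2 - sqrt (real n)/2)^2"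
    using sgn_cases[of i] by (auto simp: power2_eq_square algebra_simps)
  finally show ?thesis .
qed

lemma flips: assumes "j \<in> {1..4::nat}"
  shows "\<exists>k\<in>{1..4}. sgnx k = - sgnx j \<and> sgny k = sgny j"
    "\<exists>k\<in>{1..4}. sgnx k = sgnx j \<and> sgny k = - sgny j"
    "\<exists>k\<in>{1..4}. sgnx k = - sgnx j \<and> sgny k = - sgny j"
proof -
  have jj: "j = 1 \<or> j = 2 \<or> j = 3 \<or> j = 4" using assms by auto
  show "\<exists>k\<in>{1..4}. sgnx k = - sgnx j \<and> sgny k = sgny j"
    by (rule bexI[of _ "5 - j"]) (use jj in \<open>auto simp: sgnx_def sgny_def\<close>)
  show "\<exists>k\<in>{1..4}. sgnx k = sgnx j \<and> sgny k = - sgny j"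
    by (rule bexI[of _ "if j = 1 then 2 else if j = 2 then 1 else if j = 3 then 4 else 3"])
       (use jj in \<open>auto simp: sgnx_def sgny_def\<close>)
  show "\<exists>k\<in>{1..4}. sgnx k = - sgnx j \<and> sgny k = - sgny j"
    by (rule bexI[of _ "if j \<le> 2 then j + 2 else j - 2"])
       (use jj in \<open>auto simp: sgnx_def sgny_def\<close>)
qed

lemma bnd: fixes x y S :: real assumes "\<bar>x\<bar> \<le> S" "\<bar>y\<bar> \<le> S" shows "x^2 + y^2 \<le> 2 * S^2"
proof -
  have "\<bar>x\<bar>^2 \<le> S^2" by (rule power_mono) (use assms in auto)
  moreover have "\<bar>y\<bar>^2 \<le> S^2" by (rule power_mono) (use assms in auto)
  ultimately show ?thesis by simp
qed

lemma geo:
  fixes X :: "real^2" and n j :: nat and \<delta> r :: real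
  assumes X: "X \<in> square n" and j: "j \<in> {1..4}"
    and D: "\<And>i. i \<in> {1..4} \<Longrightarrow> norm (X - corner n j) - norm (X - corner n i) \<le> \<delta>"
    and dr: "\<delta> \<le> 4/3*r" and rn: "r \<le> sqrt (real n) / 100" and r0: "0 < r"
  shows "infdist X (quarter n j) \<le> r"
proof -
  define S where "S = sqrt (real n) / 2"
  have S0: "0 < S" using rn r0 unfolding S_def by linarith
  have rS: "r \<le> S/50" using rn unfolding S_def by simp
  define u where "u = sgnx j * X$1"
  define w where "w = sgny j * X$2"
  have X1: "\<bar>X$1\<bar> \<le> S" and X2: "\<bar>X$2\<bar> \<le> S" using X unfolding square_def S_def by auto
  have uS: "\<bar>u\<bar> \<le> S" and wS: "\<bar>w\<bar> \<le> S"
    using X1 X2 sgn_cases[of j] unfolding u_def w_def by auto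
  have sq: "\<And>i. (norm (X - corner n i))^2 = (sgnx i * X$1 - S)^2 + (sgny i * X$2 - S)^2"
    unfolding S_def by (rule corner_sq)
  have sqj: "(norm (X - corner n j))^2 = (u - S)^2 + (w - S)^2"
    using sq[of j] unfolding u_def w_def .
  have Xu: "\<bar>X$1\<bar> = \<bar>u\<bar>" and Xw: "\<bar>X$2\<bar> = \<bar>w\<bar>"
    using sgn_cases[of j] unfolding u_def w_def by auto
  show ?thesis
  proof (cases "0 \<le> u")
    case u: True
    show ?thesis
    proof (cases "0 \<le> w")
      case w: True
      have "X \<in> quarter n j" using u w uS wS unfolding quarter_def u_def w_def S_def by auto
      then show ?thesis using r0 by (simp add: infdist_zero)
    next
      case w: False
      obtain k where k: "k \<in> {1..4}" "sgnx k = sgnx j" "sgny k = - sgny j" using flips(2)[OF j] by blast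
      have sqk: "(norm (X - corner n k))^2 = (u - S)^2 + (w + S)^2"
        using sq[of k] k unfolding u_def w_def by (simp add: power2_eq_square algebra_simps)
      have "-w \<le> r"
      proof (rule key[where a="norm (X - corner n j)" and b="norm (X - corner n k)" and S=S and \<delta>=\<delta>])
        show "(norm (X - corner n j))\<^sup>2 - (norm (X - corner n k))\<^sup>2 = 4 * S * - w"
          using sqj sqk by (simp add: power2_eq_square algebra_simps)
        show "(norm (X - corner n k))\<^sup>2 \<le> 2 * S\<^sup>2"
          unfolding sqk using u w uS wS by (intro bnd) auto
      qed (use D k dr rS S0 r0 in auto)
      define y :: "real^2" where "y = vector [X$1, 0]"
      have "y \<in> quarter n j" using u uS unfolding quarter_def y_def u_def S_def by auto
      moreover have "dist X y = - w"
        using w Xw by (simp add: dist_norm nv y_def)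
      ultimately show ?thesis using \<open>-w \<le> r\<close> by (metis infdist_le order_trans)
    qed
  next
    case u: False
    show ?thesis
    proof (cases "0 \<le> w")
      case w: True
      obtain k where k: "k \<in> {1..4}" "sgnx k = - sgnx j" "sgny k = sgny j" using flips(1)[OF j] by blast
      have sqk: "(norm (X - corner n k))^2 = (u + S)^2 + (w - S)^2"
        using sq[of k] k unfolding u_def w_def by (simp add: power2_eq_square algebra_simps)
      have "-u \<le> r"
      proof (rule key[where a="norm (X - corner n j)" and b="norm (X - corner n k)" and S=S and \<delta>=\<delta>])
        show "(norm (X - corner n j))\<^sup>2 - (norm (X - corner n k))\<^sup>2 = 4 * S * - u"
          using sqj sqk by (simp add: power2_eq_square algebra_simps)
        show "(norm (X - corner n k))\<^sup>2 \<le> 2 * S\<^sup>2"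
          unfolding sqk using u w uS wS by (intro bnd) auto
      qed (use D k dr rS S0 r0 in auto)
      define y :: "real^2" where "y = vector [0, X$2]"
      have "y \<in> quarter n j" using w wS unfolding quarter_def y_def w_def S_def by auto
      moreover have "dist X y = - u"
        using u Xu by (simp add: dist_norm nv y_def)
      ultimately show ?thesis using \<open>-u \<le> r\<close> by (metis infdist_le order_trans)
    next
      case w: False
      obtain k where k: "k \<in> {1..4}" "sgnx k = - sgnx j" "sgny k = - sgny j" using flips(3)[OF j] by blast
      have sqk: "(norm (X - corner n k))^2 = (u + S)^2 + (w + S)^2"
        using sq[of k] k unfolding u_def w_def by (simp add: power2_eq_square algebra_simps)
      have "-(u+w) \<le> r"
      proof (rule key[where a="norm (X - corner n j)" and b="norm (X - corner n k)" and S=S and \<delta>=\<delta>])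
        show "(norm (X - corner n j))\<^sup>2 - (norm (X - corner n k))\<^sup>2 = 4 * S * - (u+w)"
          using sqj sqk by (simp add: power2_eq_square algebra_simps)
        show "(norm (X - corner n k))\<^sup>2 \<le> 2 * S\<^sup>2"
          unfolding sqk using u w uS wS by (intro bnd) auto
      qed (use D k dr rS S0 r0 in auto)
      have "(0::real^2) \<in> quarter n j" using S0 unfolding quarter_def S_def by auto
      moreover have "dist X 0 \<le> - (u+w)"
      proof -
        have "dist X 0 = sqrt (u^2 + w^2)"
          using Xu Xw by (simp add: dist_norm nv) (metis power2_abs)
        also have "\<dots> \<le> sqrt ((-(u+w))^2)"
          using u w mult_nonneg_nonneg[of "-u" "-w"] by (intro real_sqrt_le_mono) (simp add: power2_eq_square algebra_simps)
        also have "\<dots> = -(u+w)" using u w by simp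
        finally show ?thesis .
      qed
      ultimately show ?thesis using \<open>-(u+w) \<le> r\<close> by (metis infdist_le order_trans)
    qed
  qed
qed

lemma extract_fin:
  fixes r N a b :: real and d :: enat
  assumes r: "0 < r"
    and h: "ereal r * (ereal_of_enat d + ereal a) \<ge> ereal N \<and> ereal N \<ge> ereal r * (ereal_of_enat d - ereal b)"
  shows "\<exists>k. d = enat k \<and> N \<le> r * (real k + a) \<and> r * (real k - b) \<le> N"
proof (cases d)
  case (enat k)
  then show ?thesis using h by auto
next
  case infinity
  then show ?thesis using h r by auto
qed

theorem lemma4p1:
  fixes \<epsilon> :: real and r :: "nat \<Rightarrow> real"
  assumes "0 < \<epsilon>" "\<epsilon> < 1/2"
    and "\<And>n. r n > 0"
    and "r \<in> o(\<lambda>n. sqrt (real n))"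
  shows "\<exists>n0. \<forall>n\<ge>n0. \<forall>(V :: nat set) E X vs.
     finite V \<longrightarrow> (\<forall>u w. E u w \<longrightarrow> E w u) \<longrightarrow> (\<forall>u. \<not> E u u) \<longrightarrow>
     (\<forall>v\<in>V. X v \<in> square n) \<longrightarrow>
     vs ` {1..4} \<subseteq> V \<longrightarrow> inj_on vs {1..4} \<longrightarrow>
     (\<forall>i\<in>{1..4}. \<forall>v \<in> V - vs ` {1..4}.
        ereal (r n) * (ereal_of_enat (gdist V E v (vs i)) + ereal (\<epsilon>/3)) \<ge> ereal (norm (X v - corner n i))
      \<and> ereal (norm (X v - corner n i)) \<ge> ereal (r n) * (ereal_of_enat (gdist V E v (vs i)) - ereal (1 + \<epsilon>/3))) \<longrightarrow>
     (\<forall>j\<in>{1..4}. \<forall>v \<in> V - vs ` {1..4}.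
        gdist V E v (vs j) = (MIN i\<in>{1..4}. gdist V E v (vs i)) \<longrightarrow>
        infdist (X v) (quarter n j) \<le> r n)"
proof -
  have "\<forall>\<^sub>F n in sequentially. norm (r n) \<le> 1/100 * norm (sqrt (real n))"
    by (rule landau_o.smallD[OF assms(4)]) simp
  then obtain n0 where n0: "\<And>n. n \<ge> n0 \<Longrightarrow> norm (r n) \<le> 1/100 * norm (sqrt (real n))"
    by (auto simp: eventually_sequentially)
  show ?thesis
  proof (intro exI[of _ n0] allI impI ballI)
    fix n V E X vs j v
    assume nn: "n0 \<le> n" and XS: "\<forall>v\<in>V. X v \<in> square n"
      and H: "\<forall>i\<in>{1..4}. \<forall>v \<in> V - vs ` {1..4}.
        ereal (r n) * (ereal_of_enat (gdist V E v (vs i)) + ereal (\<epsilon>/3)) \<ge> ereal (norm (X v - corner n i))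
      \<and> ereal (norm (X v - corner n i)) \<ge> ereal (r n) * (ereal_of_enat (gdist V E v (vs i)) - ereal (1 + \<epsilon>/3))"
      and j: "j \<in> {1..4}" and v: "v \<in> V - vs ` {1..4}"
      and m: "gdist V E v (vs j) = (MIN i\<in>{1..4}. gdist V E v (vs i))"
    have r0: "0 < r n" using assms(3) .
    have rn: "r n \<le> sqrt (real n) / 100" using n0[OF nn] r0 by simp
    have K: "\<And>i. i \<in> {1..4} \<Longrightarrow> \<exists>k. gdist V E v (vs i) = enat k \<and> norm (X v - corner n i) \<le> r n * (real k + \<epsilon>/3)
                 \<and> r n * (real k - (1 + \<epsilon>/3)) \<le> norm (X v - corner n i)"
      using H v r0 by (intro extract_fin) auto
    obtain kj where kj: "gdist V E v (vs j) = enat kj" "norm (X v - corner n j) \<le> r n * (real kj + \<epsilon>/3)"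
      using K[OF j] by blast
    show "infdist (X v) (quarter n j) \<le> r n"
    proof (rule geo[where \<delta> = "r n * (1 + 2*\<epsilon>/3)"])
      show "X v \<in> square n" using XS v by auto
      show "j \<in> {1..4}" by fact
      show "r n * (1 + 2 * \<epsilon> / 3) \<le> 4 / 3 * r n" using r0 assms(2) by (simp add: algebra_simps)
      show "r n \<le> sqrt (real n) / 100" by fact
      show "0 < r n" by fact
      fix i :: nat assume i: "i \<in> {1..4}"
      obtain ki where ki: "gdist V E v (vs i) = enat ki" "r n * (real ki - (1 + \<epsilon>/3)) \<le> norm (X v - corner n i)"
        using K[OF i] by blast
      have "gdist V E v (vs j) \<le> gdist V E v (vs i)" unfolding m using i by (intro Min_le) auto
      then have "kj \<le> ki" using kj ki by simp
      then have "r n * real kj \<le> r n * real ki" using r0 by simp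
      then show "norm (X v - corner n j) - norm (X v - corner n i) \<le> r n * (1 + 2 * \<epsilon> / 3)"
        using kj ki by (simp add: algebra_simps)
    qed
  qed
qed
end
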